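(* Let $H=u^\perp+t_0u$ be a hyperplane in $\mathbb{R}^n$ and let $\diamond\in\mathcal J_H(\mathcal K^n_n)$. If $\varphi_\diamond\notin\mathcal I$, then $\diamond$ cannot be weakly approximated on $\mathcal K^n_n$ by finite compositions of polarizations with respect to hyperplanes parallel to $H$.
   Context: $\mathcal K^n_n$: convex bodies in $\mathbb{R}^n$, $n\ge2$. $\mathcal J_H(\mathcal K^n_n)$: maps $\diamond:\mathcal K^n_n\to\mathcal L^n$ (measurable sets of finite measure) that are monotonic up to null sets, measure preserving, map balls to balls (up to null sets), and respect $H$-cylinders (if $A\subset(B(x,r)\cap H)+H^\perp$ essentially then $\diamond A\subset(B(x,r)\cap H)+H^\perp$ essentially). For such $\diamond$, $\varphi_\diamond:\mathbb{R}\to\mathbb{R}$ is the contraction with $\diamond B(x+tu,r)=B(x+\varphi_\diamond(t)u,r)$ essentially for all $x\in u^\perp$, $t\in\mathbb{R}$, $r>0$. $\mathcal I$ is the class of contractions $\varphi:\mathbb{R}\to\mathbb{R}$ such that whenever $a<b$ and $\varphi(s)$ lies strictly between $\varphi(a)$ and $\varphi(b)$ for all $s\in(a,b)$ (the open interval between them, empty if $\varphi(a)=\varphi(b)$), the restriction of $\varphi$ to $(a,b)$ is affine with slope $\pm1$. Polarizations may have either orientation. Weak approximability on $\mathcal E$ by maps in $\mathcal G$: for every $A\in\mathcal E$ there are $\diamond_{A,k}\in\mathcal G$ with $\|1_{\diamond_{A,k}A}-1_{\diamond A}\|_1\to0$. *)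

theory Defs
  imports "HOL-Analysis.Analysis"
begin

definition convex_bodies :: "'a::euclidean_space set set" where
  "convex_bodies = {K. compact K \<and> convex K \<and> interior K \<noteq> {}}"

definition finite_measure_sets :: "'a::euclidean_space set set" where
  "finite_measure_sets = {A. A \<in> sets lebesgue \<and> emeasure lebesgue A < \<infinity>}"

definition ess_subset :: "'a::euclidean_space set \<Rightarrow> 'a set \<Rightarrow> bool" where
  "ess_subset A B \<longleftrightarrow> A - B \<in> null_sets lebesgue"

definition ess_eq :: "'a::euclidean_space set \<Rightarrow> 'a set \<Rightarrow> bool" where
  "ess_eq A B \<longleftrightarrow> ess_subset A B \<and> ess_subset B A"

definition hyperplane :: "'a::euclidean_space \<Rightarrow> real \<Rightarrow> 'a set" where
  "hyperplane u t0 = {y. u \<bullet> y = t0}"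

definition H_cylinder :: "'a::euclidean_space \<Rightarrow> real \<Rightarrow> 'a \<Rightarrow> real \<Rightarrow> 'a set" where
  "H_cylinder u t0 x r = {z + s *\<^sub>R u | z s. z \<in> cball x r \<inter> hyperplane u t0}"

definition in_J_H :: "'a::euclidean_space \<Rightarrow> real \<Rightarrow> ('a set \<Rightarrow> 'a set) \<Rightarrow> bool" where
  "in_J_H u t0 D \<longleftrightarrow>
     (\<forall>K\<in>convex_bodies. D K \<in> finite_measure_sets) \<and>
     (\<forall>K\<in>convex_bodies. \<forall>L\<in>convex_bodies. K \<subseteq> L \<longrightarrow> ess_subset (D K) (D L)) \<and>
     (\<forall>K\<in>convex_bodies. emeasure lebesgue (D K) = emeasure lebesgue K) \<and>
     (\<forall>x r. r > 0 \<longrightarrow> (\<exists>y s. s > 0 \<and> ess_eq (D (cball x r)) (cball y s))) \<and>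
     (\<forall>A\<in>convex_bodies. \<forall>x r. r > 0 \<longrightarrow>
        ess_subset A (H_cylinder u t0 x r) \<longrightarrow> ess_subset (D A) (H_cylinder u t0 x r))"

definition contraction :: "(real \<Rightarrow> real) \<Rightarrow> bool" where
  "contraction \<phi> \<longleftrightarrow> (\<forall>s t. \<bar>\<phi> s - \<phi> t\<bar> \<le> \<bar>s - t\<bar>)"

text \<open>\<open>is_phi_of u D \<phi>\<close>: \<open>\<phi>\<close> is the contraction \<open>\<phi>_D\<close> associated with \<open>D\<close>
  (it is uniquely determined by this property).\<close>
definition is_phi_of :: "'a::euclidean_space \<Rightarrow> ('a set \<Rightarrow> 'a set) \<Rightarrow> (real \<Rightarrow> real) \<Rightarrow> bool" where
  "is_phi_of u D \<phi> \<longleftrightarrow> contraction \<phi> \<and>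
     (\<forall>x t r. u \<bullet> x = 0 \<longrightarrow> r > 0 \<longrightarrow>
        ess_eq (D (cball (x + t *\<^sub>R u) r)) (cball (x + \<phi> t *\<^sub>R u) r))"

definition class_I :: "(real \<Rightarrow> real) set" where
  "class_I = {\<phi>. contraction \<phi> \<and>
     (\<forall>a b. a < b \<longrightarrow>
        (\<forall>s\<in>{a<..<b}. min (\<phi> a) (\<phi> b) < \<phi> s \<and> \<phi> s < max (\<phi> a) (\<phi> b)) \<longrightarrow>
        (\<exists>\<sigma> c. (\<sigma> = 1 \<or> \<sigma> = -1) \<and> (\<forall>s\<in>{a<..<b}. \<phi> s = \<sigma> * s + c)))}"

text \<open>Reflection in the hyperplane {y. v \<bullet> y = c} (v a unit vector).\<close>
definition refl_hp :: "'a::euclidean_space \<Rightarrow> real \<Rightarrow> 'a \<Rightarrow> 'a" where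
  "refl_hp v c y = y - (2 * (v \<bullet> y - c)) *\<^sub>R v"

definition polarization :: "'a::euclidean_space \<Rightarrow> real \<Rightarrow> 'a set \<Rightarrow> 'a set" where
  "polarization v c A =
     {y. (v \<bullet> y \<ge> c \<and> (y \<in> A \<or> refl_hp v c y \<in> A)) \<or>
         (v \<bullet> y < c \<and> y \<in> A \<and> refl_hp v c y \<in> A)}"

definition parallel_polarizations :: "'a::euclidean_space \<Rightarrow> ('a set \<Rightarrow> 'a set) set" where
  "parallel_polarizations u = {polarization v c | v c. v = u \<or> v = - u}"

definition polarization_compositions :: "'a::euclidean_space \<Rightarrow> ('a set \<Rightarrow> 'a set) set" where
  "polarization_compositions u =
     {foldr (\<circ>) ps id | ps. ps \<noteq> [] \<and> set ps \<subseteq> parallel_polarizations u}"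

definition weakly_approximable ::
  "'a::euclidean_space set set \<Rightarrow> ('a set \<Rightarrow> 'a set) \<Rightarrow> ('a set \<Rightarrow> 'a set) set \<Rightarrow> bool" where
  "weakly_approximable E D G \<longleftrightarrow>
     (\<forall>A\<in>E. \<exists>Dk :: nat \<Rightarrow> 'a set \<Rightarrow> 'a set. (\<forall>k. Dk k \<in> G) \<and>
        ((\<lambda>k. \<integral>\<^sup>+ x. ennreal \<bar>indicator (Dk k A) x - indicator (D A) x\<bar> \<partial>lebesgue)
           \<longlonglongrightarrow> 0))"

end

theory Submission imports Defs begin

definition fold1 :: "real \<Rightarrow> real \<Rightarrow> real \<Rightarrow> real" where
  "fold1 d \<sigma> m = d + \<sigma> * \<bar>m - d\<bar>"

fun fcmp :: "(real \<times> real) list \<Rightarrow> real \<Rightarrow> real" where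
  "fcmp [] = id"
| "fcmp (x # xs) = fold1 (fst x) (snd x) \<circ> fcmp xs"

definition goodQ :: "(real \<Rightarrow> real) \<Rightarrow> bool" where
  "goodQ \<psi> \<longleftrightarrow> (\<forall>a b. a < b \<longrightarrow>
     (\<forall>s\<in>{a<..<b}. min (\<psi> a) (\<psi> b) < \<psi> s \<and> \<psi> s < max (\<psi> a) (\<psi> b)) \<longrightarrow>
     (\<exists>\<sigma>. (\<sigma> = 1 \<or> \<sigma> = -1) \<and> (\<forall>s\<in>{a..b}. \<psi> s = \<psi> a + \<sigma> * (s - a))))"

lemma fcmp_append: "fcmp (xs @ ys) = fcmp xs \<circ> fcmp ys"
  by (induction xs) (auto simp: comp_assoc)

lemma goodQ_id: "goodQ id"
  unfolding goodQ_def by (intro allI impI exI[of _ 1]) auto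

lemma goodQ_comp:
  assumes g: "goodQ g" and s0: "\<sigma>0 = 1 \<or> \<sigma>0 = -1"
  shows "goodQ (g \<circ> fold1 d \<sigma>0)"
  unfolding goodQ_def
proof (intro allI impI)
  fix a b :: real
  assume ab: "a < b"
  define f where "f = fold1 d \<sigma>0"
  assume sb0: "\<forall>s\<in>{a<..<b}. min ((g \<circ> fold1 d \<sigma>0) a) ((g \<circ> fold1 d \<sigma>0) b) < (g \<circ> fold1 d \<sigma>0) s \<and>
      (g \<circ> fold1 d \<sigma>0) s < max ((g \<circ> fold1 d \<sigma>0) a) ((g \<circ> fold1 d \<sigma>0) b)"
  then have sb: "\<And>s. a < s \<Longrightarrow> s < b \<Longrightarrow> min (g (f a)) (g (f b)) < g (f s) \<and> g (f s) < max (g (f a)) (g (f b))"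
    by (auto simp: f_def)
  have sym: "\<And>x. f (2*d - x) = f x"
    by (simp add: f_def fold1_def abs_minus_commute)
  show "\<exists>\<sigma>. (\<sigma> = 1 \<or> \<sigma> = -1) \<and> (\<forall>s\<in>{a..b}. (g \<circ> fold1 d \<sigma>0) s = (g \<circ> fold1 d \<sigma>0) a + \<sigma> * (s - a))"
  proof (cases "a < d \<and> d < b")
    case True
    show ?thesis
    proof (cases "d - a \<le> b - d")
      case le: True
      show ?thesis
      proof (cases "2*d - a < b")
        case True
        have "f (2*d - (2*d - a)) = f (2*d - a)" by (rule sym)
        then have "g (f (2*d-a)) = g (f a)" by simp
        with sb[of "2*d-a"] True \<open>a < d \<and> d < b\<close> show ?thesis by (auto simp: min_def max_def split: if_splits)
      next
        case False
        then have "2*d - a = b" using le by linarith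
        then have "f b = f a" using sym[of a] by simp
        with sb[of d] \<open>a < d \<and> d < b\<close> show ?thesis by (auto simp: min_def max_def split: if_splits)
      qed
    next
      case False
      have "f (2*d - (2*d - b)) = f (2*d - b)" by (rule sym)
      then have "g (f (2*d-b)) = g (f b)" by simp
      with sb[of "2*d-b"] False \<open>a < d \<and> d < b\<close> show ?thesis by (auto simp: min_def max_def split: if_splits)
    qed
  next
    case False
    define \<tau> where "\<tau> = (if d \<le> a then \<sigma>0 else - \<sigma>0)"
    have tau: "\<tau> = 1 \<or> \<tau> = -1" using s0 by (auto simp: \<tau>_def)
    have fa: "\<And>s. a \<le> s \<Longrightarrow> s \<le> b \<Longrightarrow> f s = f a + \<tau> * (s - a)"
      using False by (auto simp: f_def fold1_def \<tau>_def abs_if algebra_simps)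
    define A2 where "A2 = min (f a) (f b)"
    define B2 where "B2 = max (f a) (f b)"
    have fb: "f b = f a + \<tau> * (b - a)" using fa[of b] ab by simp
    have AB: "A2 < B2" using tau fb ab by (auto simp: A2_def B2_def)
    have mm: "min (g A2) (g B2) = min (g (f a)) (g (f b)) \<and> max (g A2) (g B2) = max (g (f a)) (g (f b))"
      by (auto simp: A2_def B2_def min_def max_def)
    have "\<forall>r\<in>{A2<..<B2}. min (g A2) (g B2) < g r \<and> g r < max (g A2) (g B2)"
    proof
      fix r assume r: "r \<in> {A2<..<B2}"
      define s where "s = a + \<tau> * (r - f a)"
      have s1: "a < s" "s < b" using r tau fb ab unfolding s_def A2_def B2_def by (auto simp: min_def max_def split: if_splits)
      have "f s = r" using fa[of s] s1 tau unfolding s_def by auto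
      then show "min (g A2) (g B2) < g r \<and> g r < max (g A2) (g B2)"
        using sb[OF s1] mm by simp
    qed
    with g AB obtain \<sigma>' where sg: "\<sigma>' = 1 \<or> \<sigma>' = -1" "\<forall>r\<in>{A2..B2}. g r = g A2 + \<sigma>' * (r - A2)"
      unfolding goodQ_def by blast
    have inr: "\<And>s. a \<le> s \<Longrightarrow> s \<le> b \<Longrightarrow> f s \<in> {A2..B2}"
    proof -
      fix s assume s: "a \<le> s" "s \<le> b"
      then have "f s = f a + \<tau> * (s - a)" by (rule fa)
      then show "f s \<in> {A2..B2}" using fb tau s unfolding A2_def B2_def
        by (cases "\<tau> = 1") (auto simp: min_def max_def)
    qed
    show ?thesis
    proof (intro exI[of _ "\<sigma>' * \<tau>"] conjI ballI)
      show "\<sigma>' * \<tau> = 1 \<or> \<sigma>' * \<tau> = -1" using sg(1) tau by auto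
    next
      fix s assume s: "s \<in> {a..b}"
      have fs: "f s \<in> {A2..B2}" using inr s by auto
      have fa': "f a \<in> {A2..B2}" using inr ab by auto
      have e1: "g (f s) = g A2 + \<sigma>' * (f s - A2)" using sg(2) fs by blast
      have e2: "g (f a) = g A2 + \<sigma>' * (f a - A2)" using sg(2) fa' by blast
      have e3: "f s = f a + \<tau> * (s - a)" using fa[of s] s by auto
      have d1: "g (f s) = g (f a) + \<sigma>' * (f s - f a)"
        by (simp only: e1 e2) (simp add: algebra_simps)
      have d2: "f s - f a = \<tau> * (s - a)" using e3 by simp
      have "g (f s) = g (f a) + \<sigma>' * \<tau> * (s - a)"
        using d1 unfolding d2 by (simp add: mult.assoc)
      then show "(g \<circ> fold1 d \<sigma>0) s = (g \<circ> fold1 d \<sigma>0) a + \<sigma>' * \<tau> * (s - a)"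
        by (simp add: f_def)
    qed
  qed
qed

lemma goodQ_fcmp: "set fs \<subseteq> {p. snd p = 1 \<or> snd p = -1} \<Longrightarrow> goodQ (fcmp fs)"
proof (induction fs rule: rev_induct)
  case Nil then show ?case using goodQ_id by (simp add: id_def)
next
  case (snoc x xs)
  then have "goodQ (fcmp xs)" by auto
  moreover have "snd x = 1 \<or> snd x = -1" using snoc.prems by auto
  moreover have "fcmp (xs @ [x]) = fcmp xs \<circ> fold1 (fst x) (snd x)"
    by (simp add: fcmp_append)
  ultimately show ?case by (metis goodQ_comp)
qed

lemma contraction_fold1: "\<sigma> = 1 \<or> \<sigma> = -1 \<Longrightarrow> contraction (fold1 d \<sigma>)"
  unfolding contraction_def fold1_def by (auto simp: abs_if)

lemma contraction_fcmp: "set fs \<subseteq> {p. snd p = 1 \<or> snd p = -1} \<Longrightarrow> contraction (fcmp fs)"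
proof (induction fs)
  case Nil then show ?case by (simp add: contraction_def)
next
  case (Cons x xs)
  then have c1: "contraction (fcmp xs)" and c2: "contraction (fold1 (fst x) (snd x))"
    using contraction_fold1 by auto
  show ?case unfolding contraction_def
  proof (intro allI)
    fix s t
    have "\<bar>fold1 (fst x) (snd x) (fcmp xs s) - fold1 (fst x) (snd x) (fcmp xs t)\<bar> \<le> \<bar>fcmp xs s - fcmp xs t\<bar>"
      using c2 unfolding contraction_def by blast
    also have "\<dots> \<le> \<bar>s - t\<bar>" using c1 unfolding contraction_def by blast
    finally show "\<bar>fcmp (x # xs) s - fcmp (x # xs) t\<bar> \<le> \<bar>s - t\<bar>" by simp
  qed
qed


lemma contraction_cont: "contraction f \<Longrightarrow> continuous_on S f"
  by (rule lipschitz_on_continuous_on[of 1])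
     (auto simp: lipschitz_on_def contraction_def dist_real_def)

lemma core1d:
  fixes \<phi> :: "real \<Rightarrow> real"
  assumes c: "contraction \<phi>" and ab: "a < b" and pab: "\<phi> a < \<phi> b"
    and strict: "\<forall>s\<in>{a<..<b}. \<phi> a < \<phi> s \<and> \<phi> s < \<phi> b"
    and gap: "\<phi> b - \<phi> a < b - a"
  shows "\<exists>\<epsilon>>0. \<forall>\<psi>. contraction \<psi> \<longrightarrow> goodQ \<psi> \<longrightarrow> (\<exists>s\<in>{a..b}. \<epsilon> < \<bar>\<psi> s - \<phi> s\<bar>)"
proof -
  define \<delta> where "\<delta> = (b - a) - (\<phi> b - \<phi> a)"
  define G where "G = (\<phi> b - \<phi> a) / 2"
  define \<kappa> where "\<kappa> = min (\<delta>/8) (min ((b-a)/4) G)"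
  have \<delta>: "\<delta> > 0" using gap by (simp add: \<delta>_def)
  have G: "G > 0" using pab by (simp add: G_def)
  have \<kappa>: "\<kappa> > 0" "\<kappa> \<le> \<delta>/8" "\<kappa> \<le> (b-a)/4" "\<kappa> \<le> G"
  proof -
    show "\<kappa> > 0" unfolding \<kappa>_def using \<delta> G ab by simp
    show "\<kappa> \<le> \<delta>/8" unfolding \<kappa>_def by (rule min.cobounded1)
    show "\<kappa> \<le> (b-a)/4" unfolding \<kappa>_def by (meson min.cobounded1 min.cobounded2 order_trans)
    show "\<kappa> \<le> G" unfolding \<kappa>_def by (meson min.cobounded2 order_trans)
  qed
  define a' where "a' = a + \<kappa>"
  define b' where "b' = b - \<kappa>"
  have a'b': "a < a'" "a' < b'" "b' < b" using \<kappa> by (auto simp: a'_def b'_def)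
  have cphi: "\<And>s t. \<bar>\<phi> s - \<phi> t\<bar> \<le> \<bar>s - t\<bar>" using c by (auto simp: contraction_def)
  have lowgap: "\<And>s. a \<le> s \<Longrightarrow> s \<le> a' \<Longrightarrow> \<phi> s \<le> \<phi> b - G"
  proof -
    fix s assume "a \<le> s" "s \<le> a'"
    then have "\<phi> s \<le> \<phi> a + \<kappa>" using cphi[of s a] by (auto simp: a'_def)
    then show "\<phi> s \<le> \<phi> b - G" using \<kappa>(4) unfolding G_def by (simp add: field_simps)
  qed
  have highgap: "\<And>s. b' \<le> s \<Longrightarrow> s \<le> b \<Longrightarrow> \<phi> a + G \<le> \<phi> s"
  proof -
    fix s assume "b' \<le> s" "s \<le> b"
    then have "\<phi> b - \<kappa> \<le> \<phi> s" using cphi[of s b] by (auto simp: b'_def)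
    then show "\<phi> a + G \<le> \<phi> s" using \<kappa>(4) unfolding G_def by (simp add: field_simps)
  qed
  have midlen: "\<phi> b' - \<phi> a' \<le> (b' - a') - \<delta>/2"
  proof -
    have "\<phi> b' - \<phi> a' \<le> (\<phi> b - \<phi> a) + \<bar>\<phi> b - \<phi> b'\<bar> + \<bar>\<phi> a' - \<phi> a\<bar>" by linarith
    also have "\<dots> \<le> (\<phi> b - \<phi> a) + \<kappa> + \<kappa>"
      using cphi[of b b'] cphi[of a' a] \<kappa> by (auto simp: a'_def b'_def)
    finally show ?thesis using \<kappa>(2) unfolding \<delta>_def a'_def b'_def by argo
  qed
  define f3 where "f3 = (\<lambda>s. min (\<phi> s - \<phi> a) (\<phi> b - \<phi> s))"
  have cf3: "continuous_on {a'..b'} f3"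
    unfolding f3_def using contraction_cont[OF c]
    by (intro continuous_intros) auto
  obtain sm where sm: "sm \<in> {a'..b'}" "\<And>y. y \<in> {a'..b'} \<Longrightarrow> f3 sm \<le> f3 y"
    using continuous_attains_inf[OF compact_Icc _ cf3] a'b' by auto
  define \<gamma> where "\<gamma> = f3 sm"
  have \<gamma>: "\<gamma> > 0" using strict sm(1) a'b' by (auto simp: \<gamma>_def f3_def)
  have midgap: "\<And>s. a' \<le> s \<Longrightarrow> s \<le> b' \<Longrightarrow> \<phi> a + \<gamma> \<le> \<phi> s \<and> \<phi> s \<le> \<phi> b - \<gamma>"
  proof -
    fix s assume s: "a' \<le> s" "s \<le> b'"
    then have "\<gamma> \<le> min (\<phi> s - \<phi> a) (\<phi> b - \<phi> s)" using sm(2)[of s] by (simp add: \<gamma>_def f3_def)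
    then have "\<gamma> \<le> \<phi> s - \<phi> a" "\<gamma> \<le> \<phi> b - \<phi> s" by auto
    then show "\<phi> a + \<gamma> \<le> \<phi> s \<and> \<phi> s \<le> \<phi> b - \<gamma>" by argo
  qed
  define \<epsilon> where "\<epsilon> = min (\<delta>/8) (min (G/4) (\<gamma>/4))"
  have \<epsilon>: "\<epsilon> > 0" "\<epsilon> \<le> \<delta>/8" "\<epsilon> \<le> G/4" "\<epsilon> \<le> \<gamma>/4" using \<delta> G \<gamma> by (auto simp: \<epsilon>_def)
  show ?thesis
  proof (intro exI[of _ \<epsilon>] conjI allI impI)
    show "\<epsilon> > 0" by fact
  next
    fix \<psi> assume cpsi: "contraction \<psi>" and gq: "goodQ \<psi>"
    show "\<exists>s\<in>{a..b}. \<epsilon> < \<bar>\<psi> s - \<phi> s\<bar>"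
    proof (rule ccontr)
      assume "\<not> ?thesis"
      then have cl: "\<And>s. a \<le> s \<Longrightarrow> s \<le> b \<Longrightarrow> \<bar>\<psi> s - \<phi> s\<bar> \<le> \<epsilon>" by force
      have contpsi: "continuous_on UNIV \<psi>" using contraction_cont[OF cpsi] .
      have pa: "\<bar>\<psi> a - \<phi> a\<bar> \<le> \<epsilon>" and pb: "\<bar>\<psi> b - \<phi> b\<bar> \<le> \<epsilon>" using cl ab by auto
      define T1 where "T1 = {a..a'} \<inter> {s. \<psi> s \<le> \<psi> a}"
      have "closed {s. \<psi> s \<le> \<psi> a}"
        by (rule closed_Collect_le) (use contpsi in auto)
      then have cT1: "compact T1" unfolding T1_def by (intro compact_Int_closed) auto
      have "a \<in> T1" using a'b' by (auto simp: T1_def)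
      then obtain \<alpha> where al: "\<alpha> \<in> T1" "\<And>y. y \<in> T1 \<Longrightarrow> y \<le> \<alpha>"
        using continuous_attains_sup[OF cT1 _ continuous_on_id] by fastforce
      define T2 where "T2 = {b'..b} \<inter> {s. \<psi> b \<le> \<psi> s}"
      have "closed {s. \<psi> b \<le> \<psi> s}"
        by (rule closed_Collect_le) (use contpsi in auto)
      then have cT2: "compact T2" unfolding T2_def by (intro compact_Int_closed) auto
      have "b \<in> T2" using a'b' by (auto simp: T2_def)
      then obtain \<beta> where be: "\<beta> \<in> T2" "\<And>y. y \<in> T2 \<Longrightarrow> \<beta> \<le> y"
        using continuous_attains_inf[OF cT2 _ continuous_on_id] by fastforce
      have al1: "a \<le> \<alpha>" "\<alpha> \<le> a'" "\<psi> \<alpha> \<le> \<psi> a" using al(1) by (auto simp: T1_def)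
      have be1: "b' \<le> \<beta>" "\<beta> \<le> b" "\<psi> b \<le> \<psi> \<beta>" using be(1) by (auto simp: T2_def)
      have psiab: "\<psi> a < \<psi> b" using pa pb \<epsilon> G by (simp add: G_def abs_le_iff)
      have inside: "\<psi> a < \<psi> s \<and> \<psi> s < \<psi> b" if s: "\<alpha> < s" "s < \<beta>" for s
      proof (cases "s \<le> a'")
        case True
        have "s \<notin> T1" using al(2)[of s] s by auto
        then have "\<psi> a < \<psi> s" using True al1 s by (auto simp: T1_def)
        moreover have "\<psi> s < \<psi> b"
          using lowgap[of s] cl[of s] True al1 s pb \<epsilon> a'b' be1 by (auto simp: abs_le_iff)
        ultimately show ?thesis by simp
      next
        case False
        show ?thesis
        proof (cases "b' \<le> s")
          case True
          have "s \<notin> T2" using be(2)[of s] s by auto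
          then have "\<psi> s < \<psi> b" using True be1 s by (auto simp: T2_def)
          moreover have "\<psi> a < \<psi> s"
            using highgap[of s] cl[of s] True be1 s pa \<epsilon> a'b' al1 by (auto simp: abs_le_iff)
          ultimately show ?thesis by simp
        next
          case False2: False
          have "\<phi> a + \<gamma> \<le> \<phi> s \<and> \<phi> s \<le> \<phi> b - \<gamma>" using midgap[of s] False False2 by auto
          then show ?thesis using cl[of s] pa pb \<epsilon> False False2 a'b' by (auto simp: abs_le_iff)
        qed
      qed
      have albe: "\<alpha> < \<beta>" using al1 be1 a'b' by auto
      have "\<forall>s\<in>{\<alpha><..<\<beta>}. min (\<psi> \<alpha>) (\<psi> \<beta>) < \<psi> s \<and> \<psi> s < max (\<psi> \<alpha>) (\<psi> \<beta>)"
      proof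
        fix s assume "s \<in> {\<alpha><..<\<beta>}"
        then have "\<psi> a < \<psi> s \<and> \<psi> s < \<psi> b" using inside by auto
        then show "min (\<psi> \<alpha>) (\<psi> \<beta>) < \<psi> s \<and> \<psi> s < max (\<psi> \<alpha>) (\<psi> \<beta>)"
          using al1(3) be1(3) psiab by (simp add: min_def max_def)
      qed
      with gq albe obtain \<sigma> where sg: "\<sigma> = 1 \<or> \<sigma> = -1" "\<forall>s\<in>{\<alpha>..\<beta>}. \<psi> s = \<psi> \<alpha> + \<sigma> * (s - \<alpha>)"
        unfolding goodQ_def by blast
      have "\<psi> \<beta> = \<psi> \<alpha> + \<sigma> * (\<beta> - \<alpha>)" using sg(2) albe by (meson atLeastAtMost_iff order_refl less_imp_le)
      then have s1: "\<sigma> = 1" using sg(1) albe al1 be1 psiab by auto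
      have i1: "b' \<in> {\<alpha>..\<beta>}" and i2: "a' \<in> {\<alpha>..\<beta>}" using al1 be1 a'b' by auto
      have "\<psi> b' = \<psi> \<alpha> + (b' - \<alpha>)" using bspec[OF sg(2) i1] s1 by simp
      moreover have "\<psi> a' = \<psi> \<alpha> + (a' - \<alpha>)" using bspec[OF sg(2) i2] s1 by simp
      ultimately have "\<psi> b' - \<psi> a' = b' - a'" by simp
      moreover have "\<bar>\<psi> b' - \<phi> b'\<bar> \<le> \<epsilon>" "\<bar>\<psi> a' - \<phi> a'\<bar> \<le> \<epsilon>" using cl a'b' by auto
      ultimately show False using midlen \<epsilon> \<delta> by (auto simp: abs_le_iff)
    qed
  qed
qed


definition Sset :: "'a::euclidean_space \<Rightarrow> 'a \<Rightarrow> real \<Rightarrow> real \<Rightarrow> (real \<Rightarrow> real) \<Rightarrow> 'a set" where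
  "Sset u e R h g = {y. norm (y - (u \<bullet> y) *\<^sub>R u) \<le> R \<and> \<bar>u \<bullet> y - g (e \<bullet> y)\<bar> \<le> h}"

lemma ineqA:
  fixes t m c h :: real
  assumes "(c \<le> t \<and> (\<bar>t - m\<bar> \<le> h \<or> \<bar>2*c - t - m\<bar> \<le> h)) \<or> (t < c \<and> \<bar>t - m\<bar> \<le> h \<and> \<bar>2*c - t - m\<bar> \<le> h)"
  shows "\<bar>t - fold1 c 1 m\<bar> \<le> h"
  using assms unfolding fold1_def by (auto simp: abs_if split: if_splits)

lemma ineqB:
  fixes t m c h :: real
  assumes "(c \<le> -t \<and> (\<bar>t - m\<bar> \<le> h \<or> \<bar>-t - 2*c - m\<bar> \<le> h)) \<or> (-t < c \<and> \<bar>t - m\<bar> \<le> h \<and> \<bar>-t - 2*c - m\<bar> \<le> h)"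
  shows "\<bar>t - fold1 (-c) (-1) m\<bar> \<le> h"
  using assms unfolding fold1_def by (auto simp: abs_if split: if_splits)

lemma polarization_mono: "A \<subseteq> B \<Longrightarrow> polarization v c A \<subseteq> polarization v c B"
  unfolding polarization_def by auto

lemma pol_S:
  fixes u e :: "'a::euclidean_space"
  assumes u: "norm u = 1" and eu: "e \<bullet> u = 0" and v: "v = u \<or> v = - u"
  shows "\<exists>d \<sigma>. (\<sigma> = 1 \<or> \<sigma> = -1) \<and> polarization v c (Sset u e R h g) \<subseteq> Sset u e R h (fold1 d \<sigma> \<circ> g)"
proof -
  have uu: "u \<bullet> u = 1" using u by (simp add: norm_eq_1)
  have ue: "u \<bullet> e = 0" using eu by (simp add: inner_commute)
  from v show ?thesis
  proof
    assume vu: "v = u"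
    have "polarization v c (Sset u e R h g) \<subseteq> Sset u e R h (fold1 c 1 \<circ> g)"
      proof
        fix y assume y: "y \<in> polarization v c (Sset u e R h g)"
        define r where "r = refl_hp u c y"
        have r1: "u \<bullet> r = 2*c - u \<bullet> y" unfolding r_def refl_hp_def
          by (simp add: inner_diff_right uu algebra_simps)
        have r2: "e \<bullet> r = e \<bullet> y" unfolding r_def refl_hp_def
          by (simp add: inner_diff_right eu)
        have r3: "r - (2*c - u \<bullet> y) *\<^sub>R u = y - (u \<bullet> y) *\<^sub>R u" unfolding r_def refl_hp_def
          by (simp add: algebra_simps) (metis mult_2_right scaleR_add_left mult.commute)
        have rr: "refl_hp v c y = r" by (simp add: r_def vu)
        have vy: "v \<bullet> y = u \<bullet> y" by (simp add: vu)
        have y': "(c \<le> v \<bullet> y \<and> (y \<in> Sset u e R h g \<or> refl_hp v c y \<in> Sset u e R h g)) \<or>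
                  (v \<bullet> y < c \<and> y \<in> Sset u e R h g \<and> refl_hp v c y \<in> Sset u e R h g)"
          using y unfolding polarization_def by simp
        note y' = y'[unfolded rr vy]
        have mem: "r \<in> Sset u e R h g \<longleftrightarrow> norm (y - (u \<bullet> y) *\<^sub>R u) \<le> R \<and> \<bar>2*c - u \<bullet> y - g (e \<bullet> y)\<bar> \<le> h"
          unfolding Sset_def using r1 r2 r3 by simp
        have ymem: "y \<in> Sset u e R h g \<longleftrightarrow> norm (y - (u \<bullet> y) *\<^sub>R u) \<le> R \<and> \<bar>u \<bullet> y - g (e \<bullet> y)\<bar> \<le> h"
          unfolding Sset_def by simp
        have "(c \<le> u \<bullet> y \<and> (\<bar>u \<bullet> y - g (e \<bullet> y)\<bar> \<le> h \<or> \<bar>2*c - u \<bullet> y - g (e \<bullet> y)\<bar> \<le> h)) \<or>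
              (u \<bullet> y < c \<and> \<bar>u \<bullet> y - g (e \<bullet> y)\<bar> \<le> h \<and> \<bar>2*c - u \<bullet> y - g (e \<bullet> y)\<bar> \<le> h)"
          using mem ymem y' by auto
        moreover have nr: "norm (y - (u \<bullet> y) *\<^sub>R u) \<le> R"
          using mem ymem y' by auto
        ultimately have "\<bar>u \<bullet> y - fold1 c 1 (g (e \<bullet> y))\<bar> \<le> h" using ineqA by blast
        then show "y \<in> Sset u e R h (fold1 c 1 \<circ> g)" using nr by (simp add: Sset_def)
      qed
    then show ?thesis by blast
  next
    assume vu: "v = - u"
    have "polarization v c (Sset u e R h g) \<subseteq> Sset u e R h (fold1 (-c) (-1) \<circ> g)"
      proof
        fix y assume y: "y \<in> polarization v c (Sset u e R h g)"
        define r where "r = refl_hp (-u) c y"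
        have r1: "u \<bullet> r = - u \<bullet> y - 2*c" unfolding r_def refl_hp_def
          by (simp add: inner_diff_right uu algebra_simps)
        have r2: "e \<bullet> r = e \<bullet> y" unfolding r_def refl_hp_def
          by (simp add: inner_diff_right inner_add_right eu)
        have r3: "r - (- u \<bullet> y - 2*c) *\<^sub>R u = y - (u \<bullet> y) *\<^sub>R u" unfolding r_def refl_hp_def
          by (simp add: algebra_simps) (metis mult_2_right scaleR_add_left mult.commute)
        have rr: "refl_hp v c y = r" by (simp add: r_def vu)
        have vy: "v \<bullet> y = - (u \<bullet> y)" by (simp add: vu)
        have y': "(c \<le> v \<bullet> y \<and> (y \<in> Sset u e R h g \<or> refl_hp v c y \<in> Sset u e R h g)) \<or>
                  (v \<bullet> y < c \<and> y \<in> Sset u e R h g \<and> refl_hp v c y \<in> Sset u e R h g)"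
          using y unfolding polarization_def by simp
        note y' = y'[unfolded rr vy]
        have mem: "r \<in> Sset u e R h g \<longleftrightarrow> norm (y - (u \<bullet> y) *\<^sub>R u) \<le> R \<and> \<bar>- (u \<bullet> y) - 2*c - g (e \<bullet> y)\<bar> \<le> h"
          unfolding Sset_def using r1 r2 r3 by simp
        have ymem: "y \<in> Sset u e R h g \<longleftrightarrow> norm (y - (u \<bullet> y) *\<^sub>R u) \<le> R \<and> \<bar>u \<bullet> y - g (e \<bullet> y)\<bar> \<le> h"
          unfolding Sset_def by simp
        have "(c \<le> - (u \<bullet> y) \<and> (\<bar>u \<bullet> y - g (e \<bullet> y)\<bar> \<le> h \<or> \<bar>- (u \<bullet> y) - 2*c - g (e \<bullet> y)\<bar> \<le> h)) \<or>
              (- (u \<bullet> y) < c \<and> \<bar>u \<bullet> y - g (e \<bullet> y)\<bar> \<le> h \<and> \<bar>- (u \<bullet> y) - 2*c - g (e \<bullet> y)\<bar> \<le> h)"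
          using mem ymem y' by auto
        moreover have nr: "norm (y - (u \<bullet> y) *\<^sub>R u) \<le> R"
          using mem ymem y' by auto
        ultimately have "\<bar>u \<bullet> y - fold1 (-c) (-1) (g (e \<bullet> y))\<bar> \<le> h" using ineqB by blast
        then show "y \<in> Sset u e R h (fold1 (-c) (-1) \<circ> g)" using nr by (simp add: Sset_def)
      qed
    then show ?thesis by blast
  qed
qed

lemma comp_S:
  fixes u e :: "'a::euclidean_space"
  assumes u: "norm u = 1" and eu: "e \<bullet> u = 0"
  shows "set ps \<subseteq> parallel_polarizations u \<Longrightarrow>
    \<exists>fs. set fs \<subseteq> {p. snd p = 1 \<or> snd p = -1} \<and> foldr (\<circ>) ps id (Sset u e R h id) \<subseteq> Sset u e R h (fcmp fs)"
proof (induction ps)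
  case Nil
  show ?case by (intro exI[of _ "[]"]) (auto simp: id_def)
next
  case (Cons p ps)
  have "set ps \<subseteq> parallel_polarizations u" using Cons.prems by simp
  then obtain fs where fs: "set fs \<subseteq> {p. snd p = 1 \<or> snd p = -1}"
    "foldr (\<circ>) ps id (Sset u e R h id) \<subseteq> Sset u e R h (fcmp fs)" using Cons.IH by blast
  from Cons.prems obtain v c where p: "p = polarization v c" "v = u \<or> v = -u"
    unfolding parallel_polarizations_def by auto
  obtain d \<sigma> where ds: "\<sigma> = 1 \<or> \<sigma> = -1" "polarization v c (Sset u e R h (fcmp fs)) \<subseteq> Sset u e R h (fold1 d \<sigma> \<circ> fcmp fs)"
    using pol_S[OF u eu p(2)] by blast
  have "foldr (\<circ>) (p # ps) id (Sset u e R h id) = polarization v c (foldr (\<circ>) ps id (Sset u e R h id))"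
    by (simp add: p)
  also have "\<dots> \<subseteq> polarization v c (Sset u e R h (fcmp fs))" by (rule polarization_mono[OF fs(2)])
  also have "\<dots> \<subseteq> Sset u e R h (fcmp ((d,\<sigma>) # fs))" using ds(2) by simp
  finally have "foldr (\<circ>) (p # ps) id (Sset u e R h id) \<subseteq> Sset u e R h (fcmp ((d,\<sigma>) # fs))" .
  moreover have "set ((d,\<sigma>) # fs) \<subseteq> {p. snd p = 1 \<or> snd p = -1}" using fs(1) ds(1) by auto
  ultimately show ?case by blast
qed


lemma goodQ_neg: "goodQ \<psi> \<Longrightarrow> goodQ (\<lambda>s. - \<psi> s)"
  unfolding goodQ_def
proof (intro allI impI)
  fix a b :: real
  assume g: "\<forall>a b. a < b \<longrightarrow> (\<forall>s\<in>{a<..<b}. min (\<psi> a) (\<psi> b) < \<psi> s \<and> \<psi> s < max (\<psi> a) (\<psi> b)) \<longrightarrow>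
      (\<exists>\<sigma>. (\<sigma> = 1 \<or> \<sigma> = - 1) \<and> (\<forall>s\<in>{a..b}. \<psi> s = \<psi> a + \<sigma> * (s - a)))"
    and ab: "a < b"
    and st: "\<forall>s\<in>{a<..<b}. min (- \<psi> a) (- \<psi> b) < - \<psi> s \<and> - \<psi> s < max (- \<psi> a) (- \<psi> b)"
  have h1: "\<forall>s\<in>{a<..<b}. min (\<psi> a) (\<psi> b) < \<psi> s \<and> \<psi> s < max (\<psi> a) (\<psi> b)"
    using st by (auto simp: min_def max_def split: if_splits)
  note g1 = g[THEN spec[of _ a], THEN spec[of _ b]]
  from mp[OF mp[OF g1 ab] h1] obtain \<sigma> where sg: "\<sigma> = 1 \<or> \<sigma> = - 1" "\<forall>s\<in>{a..b}. \<psi> s = \<psi> a + \<sigma> * (s - a)" by blast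
  have "\<forall>s\<in>{a..b}. - \<psi> s = - \<psi> a + (-\<sigma>) * (s - a)"
  proof
    fix s assume "s \<in> {a..b}"
    then have eq: "\<psi> s = \<psi> a + \<sigma> * (s - a)" using sg(2) by blast
    show "- \<psi> s = - \<psi> a + (-\<sigma>) * (s - a)" unfolding eq by (simp add: algebra_simps)
  qed
  moreover have "-\<sigma> = 1 \<or> -\<sigma> = - 1" using sg(1) by auto
  ultimately show "\<exists>\<sigma>. (\<sigma> = 1 \<or> \<sigma> = - 1) \<and> (\<forall>s\<in>{a..b}. - \<psi> s = - \<psi> a + \<sigma> * (s - a))"
    by blast
qed

lemma contraction_neg: "contraction \<psi> \<Longrightarrow> contraction (\<lambda>s. - \<psi> s)"
  unfolding contraction_def
proof (intro allI)
  fix s t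
  assume c: "\<forall>s t. \<bar>\<psi> s - \<psi> t\<bar> \<le> \<bar>s - t\<bar>"
  have "\<bar>- \<psi> s - - \<psi> t\<bar> = \<bar>\<psi> t - \<psi> s\<bar>" by simp
  also have "\<dots> = \<bar>\<psi> s - \<psi> t\<bar>" by (rule abs_minus_commute)
  also have "\<dots> \<le> \<bar>s - t\<bar>" using c by blast
  finally show "\<bar>- \<psi> s - - \<psi> t\<bar> \<le> \<bar>s - t\<bar>" .
qed

lemma choose_eps:
  fixes \<phi> :: "real \<Rightarrow> real"
  assumes c: "contraction \<phi>" and ab: "a < b"
    and st: "\<forall>s\<in>{a<..<b}. min (\<phi> a) (\<phi> b) < \<phi> s \<and> \<phi> s < max (\<phi> a) (\<phi> b)"
    and naff: "\<not> (\<exists>\<sigma> c. (\<sigma> = 1 \<or> \<sigma> = -1) \<and> (\<forall>s\<in>{a<..<b}. \<phi> s = \<sigma> * s + c))"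
  shows "\<exists>\<epsilon>>0. \<forall>\<psi>. contraction \<psi> \<longrightarrow> goodQ \<psi> \<longrightarrow> (\<exists>s\<in>{a..b}. \<epsilon> < \<bar>\<psi> s - \<phi> s\<bar>)"
proof -
  have cphi: "\<And>s t. \<bar>\<phi> s - \<phi> t\<bar> \<le> \<bar>s - t\<bar>" using c by (auto simp: contraction_def)
  have mid: "(a+b)/2 \<in> {a<..<b}" using ab by auto
  consider "\<phi> a < \<phi> b" | "\<phi> b < \<phi> a" | "\<phi> a = \<phi> b" by linarith
  then show ?thesis
  proof cases
    case 1
    have st1: "\<forall>s\<in>{a<..<b}. \<phi> a < \<phi> s \<and> \<phi> s < \<phi> b" using st 1 by auto
    have gap: "\<phi> b - \<phi> a < b - a"
    proof (rule ccontr)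
      assume "\<not> ?thesis"
      then have eq: "\<phi> b - \<phi> a \<ge> b - a" by simp
      have "\<forall>s\<in>{a<..<b}. \<phi> s = 1 * s + (\<phi> a - a)"
      proof
        fix s assume s: "s \<in> {a<..<b}"
        have "\<phi> s - \<phi> a \<le> s - a" using cphi[of s a] s abs_ge_self[of "\<phi> s - \<phi> a"] abs_of_pos[of "s - a"] by auto
        moreover have "\<phi> b - \<phi> s \<le> b - s" using cphi[of b s] s abs_ge_self[of "\<phi> b - \<phi> s"] abs_of_pos[of "b - s"] by auto
        ultimately show "\<phi> s = 1 * s + (\<phi> a - a)" using eq by linarith
      qed
      then have "\<exists>\<sigma> c. (\<sigma> = 1 \<or> \<sigma> = -1) \<and> (\<forall>s\<in>{a<..<b}. \<phi> s = \<sigma> * s + c)"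
        by (intro exI[of _ 1] exI[of _ "\<phi> a - a"] conjI disjI1 refl)
      then show False using naff by (rule notE[rotated])
    qed
    show ?thesis by (rule core1d[OF c ab 1 st1 gap])
  next
    case 2
    have st1: "\<forall>s\<in>{a<..<b}. - \<phi> a < - \<phi> s \<and> - \<phi> s < - \<phi> b"
    proof
      fix s assume "s \<in> {a<..<b}"
      then have "min (\<phi> a) (\<phi> b) < \<phi> s \<and> \<phi> s < max (\<phi> a) (\<phi> b)" using st by blast
      then show "- \<phi> a < - \<phi> s \<and> - \<phi> s < - \<phi> b" using 2 by (simp add: min_def max_def)
    qed
    have gap: "- \<phi> b - - \<phi> a < b - a"
    proof (rule ccontr)
      assume "\<not> ?thesis"
      then have eq: "\<phi> a - \<phi> b \<ge> b - a" by simp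
      have "\<forall>s\<in>{a<..<b}. \<phi> s = (-1) * s + (\<phi> a + a)"
      proof
        fix s assume s: "s \<in> {a<..<b}"
        have "\<phi> a - \<phi> s \<le> s - a" using cphi[of a s] s abs_ge_self[of "\<phi> a - \<phi> s"] abs_of_pos[of "s - a"] by auto
        moreover have "\<phi> s - \<phi> b \<le> b - s" using cphi[of s b] s abs_ge_self[of "\<phi> s - \<phi> b"] abs_of_pos[of "b - s"] by auto
        ultimately show "\<phi> s = (-1) * s + (\<phi> a + a)" using eq by linarith
      qed
      then have "\<exists>\<sigma> c. (\<sigma> = 1 \<or> \<sigma> = -1) \<and> (\<forall>s\<in>{a<..<b}. \<phi> s = \<sigma> * s + c)"
        by (intro exI[of _ "-1"] exI[of _ "\<phi> a + a"] conjI disjI2 refl)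
      then show False using naff by (rule notE[rotated])
    qed
    have n2: "- \<phi> a < - \<phi> b" using 2 by simp
    have cn: "contraction (\<lambda>s. - \<phi> s)" by (rule contraction_neg[OF c])
    obtain \<epsilon> where e: "\<epsilon> > 0" "\<forall>\<psi>. contraction \<psi> \<longrightarrow> goodQ \<psi> \<longrightarrow> (\<exists>s\<in>{a..b}. \<epsilon> < \<bar>\<psi> s - - \<phi> s\<bar>)"
      using core1d[of "\<lambda>s. - \<phi> s" a b, OF cn ab n2 st1 gap] by blast
    show ?thesis
    proof (intro exI[of _ \<epsilon>] conjI allI impI)
      show "\<epsilon> > 0" by fact
      fix \<psi> assume c1: "contraction \<psi>" and g1: "goodQ \<psi>"
      have c2: "contraction (\<lambda>s. - \<psi> s)" by (rule contraction_neg[OF c1])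
      have g2: "goodQ (\<lambda>s. - \<psi> s)" by (rule goodQ_neg[OF g1])
      obtain s where s: "s \<in> {a..b}" "\<epsilon> < \<bar>- \<psi> s - - \<phi> s\<bar>"
        using e(2)[rule_format, OF c2 g2] by blast
      have "\<bar>- \<psi> s - - \<phi> s\<bar> = \<bar>\<psi> s - \<phi> s\<bar>" by linarith
      then show "\<exists>s\<in>{a..b}. \<epsilon> < \<bar>\<psi> s - \<phi> s\<bar>" using s by auto
    qed
  next
    case 3
    have "min (\<phi> a) (\<phi> b) < \<phi> ((a+b)/2) \<and> \<phi> ((a+b)/2) < max (\<phi> a) (\<phi> b)" using st mid by blast
    then show ?thesis using 3 by auto
  qed
qed

lemma abs_inner_unit: "norm (u::'a::euclidean_space) = 1 \<Longrightarrow> \<bar>u \<bullet> y\<bar> \<le> norm y"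
  by (metis Cauchy_Schwarz_ineq2 mult_1)

lemma A_body:
  fixes u e :: "'a::euclidean_space"
  assumes u: "norm u = 1" and e: "norm e = 1" and eu: "e \<bullet> u = 0" and R: "R > 0" and h: "h > 0"
  shows "Sset u e R h id \<in> convex_bodies"
proof -
  let ?A = "Sset u e R h id"
  have uu: "u \<bullet> u = 1" using u by (simp add: norm_eq_1)
  have ePy: "e \<bullet> (y - (u \<bullet> y) *\<^sub>R u) = e \<bullet> y" for y by (simp add: inner_diff_right eu)
  have ny: "norm y \<le> norm (y - (u \<bullet> y) *\<^sub>R u) + \<bar>u \<bullet> y\<bar>" for y
  proof -
    have "norm y = norm ((y - (u \<bullet> y) *\<^sub>R u) + (u \<bullet> y) *\<^sub>R u)" by simp
    also have "\<dots> \<le> norm (y - (u \<bullet> y) *\<^sub>R u) + norm ((u \<bullet> y) *\<^sub>R u)" by (rule norm_triangle_ineq)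
    also have "norm ((u \<bullet> y) *\<^sub>R u) = \<bar>u \<bullet> y\<bar>" using u by simp
    finally show ?thesis .
  qed
  have "bounded ?A"
    unfolding bounded_iff
  proof (intro exI[of _ "R + R + h"] ballI)
    fix y assume y: "y \<in> ?A"
    then have n1: "norm (y - (u \<bullet> y) *\<^sub>R u) \<le> R" and n2: "\<bar>u \<bullet> y - e \<bullet> y\<bar> \<le> h" by (auto simp: Sset_def)
    have "\<bar>e \<bullet> y\<bar> \<le> R" using abs_inner_unit[OF e, of "y - (u \<bullet> y) *\<^sub>R u"] n1 ePy[of y] by simp
    then have "\<bar>u \<bullet> y\<bar> \<le> R + h" using n2 by linarith
    then show "norm y \<le> R + R + h" using ny[of y] n1 by linarith
  qed
  moreover have "closed ?A"
  proof -
    have "?A = {y. norm (y - (u \<bullet> y) *\<^sub>R u) \<le> R} \<inter> {y. \<bar>u \<bullet> y - e \<bullet> y\<bar> \<le> h}" by (auto simp: Sset_def)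
    moreover have "closed {y. norm (y - (u \<bullet> y) *\<^sub>R u) \<le> R}"
      by (intro closed_Collect_le continuous_intros)
    moreover have "closed {y. \<bar>u \<bullet> y - e \<bullet> y\<bar> \<le> h}"
      by (intro closed_Collect_le continuous_intros)
    ultimately show ?thesis by auto
  qed
  ultimately have "compact ?A" using compact_eq_bounded_closed by blast
  moreover have "convex ?A"
    unfolding convex_def
  proof (intro ballI allI impI)
    fix x y :: 'a and \<mu> \<nu> :: real
    assume x: "x \<in> ?A" and y: "y \<in> ?A" and m: "0 \<le> \<mu>" "0 \<le> \<nu>" "\<mu> + \<nu> = 1"
    let ?z = "\<mu> *\<^sub>R x + \<nu> *\<^sub>R y"
    have P: "?z - (u \<bullet> ?z) *\<^sub>R u = \<mu> *\<^sub>R (x - (u \<bullet> x) *\<^sub>R u) + \<nu> *\<^sub>R (y - (u \<bullet> y) *\<^sub>R u)"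
      by (simp add: inner_add_right algebra_simps)
    have "norm (?z - (u \<bullet> ?z) *\<^sub>R u) \<le> norm (\<mu> *\<^sub>R (x - (u \<bullet> x) *\<^sub>R u)) + norm (\<nu> *\<^sub>R (y - (u \<bullet> y) *\<^sub>R u))"
      unfolding P by (rule norm_triangle_ineq)
    also have "\<dots> = \<mu> * norm (x - (u \<bullet> x) *\<^sub>R u) + \<nu> * norm (y - (u \<bullet> y) *\<^sub>R u)"
      using m by simp
    also have "\<dots> \<le> \<mu> * R + \<nu> * R"
      using x y m by (intro add_mono mult_left_mono) (auto simp: Sset_def)
    finally have n1: "norm (?z - (u \<bullet> ?z) *\<^sub>R u) \<le> R" using m by (simp add: distrib_right[symmetric])
    have Q: "u \<bullet> ?z - e \<bullet> ?z = \<mu> * (u \<bullet> x - e \<bullet> x) + \<nu> * (u \<bullet> y - e \<bullet> y)"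
      by (simp add: inner_add_right algebra_simps)
    have "\<bar>u \<bullet> ?z - e \<bullet> ?z\<bar> \<le> \<bar>\<mu> * (u \<bullet> x - e \<bullet> x)\<bar> + \<bar>\<nu> * (u \<bullet> y - e \<bullet> y)\<bar>"
      unfolding Q by (rule abs_triangle_ineq)
    also have "\<dots> = \<mu> * \<bar>u \<bullet> x - e \<bullet> x\<bar> + \<nu> * \<bar>u \<bullet> y - e \<bullet> y\<bar>"
      using m by (simp add: abs_mult)
    also have "\<dots> \<le> \<mu> * h + \<nu> * h"
      using x y m by (intro add_mono mult_left_mono) (auto simp: Sset_def)
    finally have n2: "\<bar>u \<bullet> ?z - e \<bullet> ?z\<bar> \<le> h" using m by (simp add: distrib_right[symmetric])
    show "?z \<in> ?A" using n1 n2 by (simp add: Sset_def)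
  qed
  moreover have "interior ?A \<noteq> {}"
  proof -
    define r where "r = min R h / 2"
    have r: "r > 0" using R h by (simp add: r_def)
    have "ball 0 r \<subseteq> ?A"
    proof
      fix y :: 'a assume "y \<in> ball 0 r"
      then have ny0: "norm y < r" by simp
      have "norm (y - (u \<bullet> y) *\<^sub>R u) \<le> norm y + norm ((u \<bullet> y) *\<^sub>R u)" by (rule norm_triangle_ineq4)
      also have "norm ((u \<bullet> y) *\<^sub>R u) = \<bar>u \<bullet> y\<bar>" using u by simp
      finally have "norm (y - (u \<bullet> y) *\<^sub>R u) \<le> norm y + norm y" using abs_inner_unit[OF u, of y] by linarith
      then have n1: "norm (y - (u \<bullet> y) *\<^sub>R u) \<le> R" using ny0 by (simp add: r_def)
      have "\<bar>u \<bullet> y - e \<bullet> y\<bar> \<le> norm y + norm y"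
        using abs_inner_unit[OF u, of y] abs_inner_unit[OF e, of y] by linarith
      then have n2: "\<bar>u \<bullet> y - e \<bullet> y\<bar> \<le> h" using ny0 by (simp add: r_def)
      show "y \<in> ?A" using n1 n2 by (simp add: Sset_def)
    qed
    then have "ball 0 r \<subseteq> interior ?A" using interior_maximal open_ball by blast
    then show ?thesis using r by auto
  qed
  ultimately show ?thesis by (simp add: convex_bodies_def)
qed


lemma ball_in_A:
  fixes u e :: "'a::euclidean_space"
  assumes u: "norm u = 1" and e: "norm e = 1" and eu: "e \<bullet> u = 0"
    and R: "\<bar>s0\<bar> + 2 * \<rho> \<le> R" and h: "2 * \<rho> \<le> h"
  shows "cball (s0 *\<^sub>R e + s0 *\<^sub>R u) \<rho> \<subseteq> Sset u e R h id"
proof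
  fix y assume y: "y \<in> cball (s0 *\<^sub>R e + s0 *\<^sub>R u) \<rho>"
  define c where "c = s0 *\<^sub>R e + s0 *\<^sub>R u"
  define z where "z = y - c"
  have nz: "norm z \<le> \<rho>" using y by (simp add: z_def c_def dist_norm norm_minus_commute)
  have uu: "u \<bullet> u = 1" using u by (simp add: norm_eq_1)
  have ee: "e \<bullet> e = 1" using e by (simp add: norm_eq_1)
  have ue: "u \<bullet> e = 0" using eu by (simp add: inner_commute)
  have uc: "u \<bullet> c = s0" by (simp add: c_def inner_add_right uu ue)
  have ec: "e \<bullet> c = s0" by (simp add: c_def inner_add_right ee eu)
  have yz: "y = z + c" by (simp add: z_def)
  have uz: "\<bar>u \<bullet> z\<bar> \<le> \<rho>" using abs_inner_unit[OF u, of z] nz by linarith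
  have ez: "\<bar>e \<bullet> z\<bar> \<le> \<rho>" using abs_inner_unit[OF e, of z] nz by linarith
  have P: "y - (u \<bullet> y) *\<^sub>R u = (z - (u \<bullet> z) *\<^sub>R u) + s0 *\<^sub>R e"
    unfolding yz by (simp add: inner_add_right uc algebra_simps c_def uu ue)
  have "norm (y - (u \<bullet> y) *\<^sub>R u) \<le> norm (z - (u \<bullet> z) *\<^sub>R u) + norm (s0 *\<^sub>R e)"
    unfolding P by (rule norm_triangle_ineq)
  also have "\<dots> \<le> (norm z + norm ((u \<bullet> z) *\<^sub>R u)) + \<bar>s0\<bar>"
    using e norm_triangle_ineq4[of z "(u \<bullet> z) *\<^sub>R u"] by simp
  also have "norm ((u \<bullet> z) *\<^sub>R u) = \<bar>u \<bullet> z\<bar>" using u by simp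
  finally have n1: "norm (y - (u \<bullet> y) *\<^sub>R u) \<le> R" using nz uz R by linarith
  have "u \<bullet> y - e \<bullet> y = u \<bullet> z - e \<bullet> z" unfolding yz by (simp add: inner_add_right uc ec)
  then have n2: "\<bar>u \<bullet> y - e \<bullet> y\<bar> \<le> h" using uz ez h by linarith
  show "y \<in> Sset u e R h id" using n1 n2 by (simp add: Sset_def)
qed

lemma ball_disj:
  fixes u e :: "'a::euclidean_space"
  assumes u: "norm u = 1" and e: "norm e = 1" and eu: "e \<bullet> u = 0"
    and c: "contraction \<psi>" and gap: "2 * \<rho> + h < \<bar>\<psi> s0 - t\<bar>"
  shows "cball (s0 *\<^sub>R e + t *\<^sub>R u) \<rho> \<inter> Sset u e R h \<psi> = {}"
proof (rule ccontr)
  assume "\<not> ?thesis"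
  then obtain y where y: "y \<in> cball (s0 *\<^sub>R e + t *\<^sub>R u) \<rho>" "y \<in> Sset u e R h \<psi>" by blast
  define c where "c = s0 *\<^sub>R e + t *\<^sub>R u"
  define z where "z = y - c"
  have nz: "norm z \<le> \<rho>" using y(1) by (simp add: z_def c_def dist_norm norm_minus_commute)
  have uu: "u \<bullet> u = 1" using u by (simp add: norm_eq_1)
  have ee: "e \<bullet> e = 1" using e by (simp add: norm_eq_1)
  have ue: "u \<bullet> e = 0" using eu by (simp add: inner_commute)
  have uc: "u \<bullet> c = t" by (simp add: c_def inner_add_right uu ue)
  have ec: "e \<bullet> c = s0" by (simp add: c_def inner_add_right ee eu)
  have yz: "y = z + c" by (simp add: z_def)
  have uz: "\<bar>u \<bullet> z\<bar> \<le> \<rho>" using abs_inner_unit[OF u, of z] nz by linarith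
  have ez: "\<bar>e \<bullet> z\<bar> \<le> \<rho>" using abs_inner_unit[OF e, of z] nz by linarith
  have uy: "u \<bullet> y = t + u \<bullet> z" unfolding yz by (simp add: inner_add_right uc)
  have ey: "e \<bullet> y = s0 + e \<bullet> z" unfolding yz by (simp add: inner_add_right ec)
  have "\<bar>\<psi> (e \<bullet> y) - \<psi> s0\<bar> \<le> \<bar>e \<bullet> y - s0\<bar>" using c unfolding contraction_def by blast
  then have p1: "\<bar>\<psi> (e \<bullet> y) - \<psi> s0\<bar> \<le> \<rho>" using ey ez by simp
  have p2: "\<bar>u \<bullet> y - \<psi> (e \<bullet> y)\<bar> \<le> h" using y(2) by (simp add: Sset_def)
  have "\<bar>\<psi> s0 - t\<bar> \<le> 2 * \<rho> + h" using p1 p2 uy uz by linarith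
  then show False using gap by linarith
qed


lemma l1: "\<rho> > 0 \<Longrightarrow> emeasure lebesgue (cball (c::'a::euclidean_space) \<rho>) = ennreal (unit_ball_vol (real DIM('a)) * \<rho> ^ DIM('a))"
  by (simp add: emeasure_cball)

lemma l2: "\<rho> > 0 \<Longrightarrow> emeasure lebesgue (cball (c::'a::euclidean_space) \<rho>) > 0"
  unfolding l1 by simp

lemma J_parts:
  fixes D :: "'a::euclidean_space set \<Rightarrow> 'a set"
  assumes "in_J_H u t0 D"
  shows "\<And>K :: 'a set. K \<in> convex_bodies \<Longrightarrow> D K \<in> sets lebesgue"
    and "\<And>K L :: 'a set. K \<in> convex_bodies \<Longrightarrow> L \<in> convex_bodies \<Longrightarrow> K \<subseteq> L \<Longrightarrow> ess_subset (D K) (D L)"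
proof -
  have J1: "\<forall>K\<in>convex_bodies. D K \<in> finite_measure_sets" using assms unfolding in_J_H_def by (rule conjunct1)
  have J2: "\<forall>K\<in>convex_bodies. \<forall>L\<in>convex_bodies. K \<subseteq> L \<longrightarrow> ess_subset (D K) (D L)"
    using assms unfolding in_J_H_def by (elim conjE)
  show "\<And>K :: 'a set. K \<in> convex_bodies \<Longrightarrow> D K \<in> sets lebesgue"
  proof -
    fix K :: "'a set" assume "K \<in> convex_bodies"
    then have "D K \<in> finite_measure_sets" using J1 by (rule bspec[rotated])
    then show "D K \<in> sets lebesgue" unfolding finite_measure_sets_def by simp
  qed
  show "\<And>K L :: 'a set. K \<in> convex_bodies \<Longrightarrow> L \<in> convex_bodies \<Longrightarrow> K \<subseteq> L \<Longrightarrow> ess_subset (D K) (D L)"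
    using J2 by blast
qed

theorem theorem6p6:
  fixes D :: "'a::euclidean_space set \<Rightarrow> 'a set"
    and u :: 'a and t0 :: real and \<phi> :: "real \<Rightarrow> real"
  assumes "DIM('a) \<ge> 2"
    and "norm u = 1"
    and "in_J_H u t0 D"
    and "is_phi_of u D \<phi>"
    and "\<phi> \<notin> class_I"
  shows "\<not> weakly_approximable convex_bodies D (polarization_compositions u)"
proof
  assume wa: "weakly_approximable convex_bodies D (polarization_compositions u)"
  have u: "norm u = 1" by fact
  have J: "in_J_H u t0 D" by fact
  have cphi: "contraction \<phi>" using assms(4) by (simp add: is_phi_of_def)
  have phiball: "\<And>x t r. u \<bullet> x = 0 \<Longrightarrow> r > 0 \<Longrightarrow> ess_eq (D (cball (x + t *\<^sub>R u) r)) (cball (x + \<phi> t *\<^sub>R u) r)"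
    using assms(4) by (simp add: is_phi_of_def)
  from assms(5) cphi obtain a b where ab: "a < b"
    and st: "\<forall>s\<in>{a<..<b}. min (\<phi> a) (\<phi> b) < \<phi> s \<and> \<phi> s < max (\<phi> a) (\<phi> b)"
    and naff: "\<not> (\<exists>\<sigma> c. (\<sigma> = 1 \<or> \<sigma> = -1) \<and> (\<forall>s\<in>{a<..<b}. \<phi> s = \<sigma> * s + c))"
    unfolding class_I_def by blast
  obtain \<epsilon>0 where e0: "\<epsilon>0 > 0" and He0: "\<forall>\<psi>. contraction \<psi> \<longrightarrow> goodQ \<psi> \<longrightarrow> (\<exists>s\<in>{a..b}. \<epsilon>0 < \<bar>\<psi> s - \<phi> s\<bar>)"
    using choose_eps[OF cphi ab st naff] by blast
  define \<epsilon> where "\<epsilon> = min \<epsilon>0 1"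
  have \<epsilon>: "\<epsilon> > 0" "\<epsilon> \<le> 1" "\<epsilon> \<le> \<epsilon>0" using e0 by (auto simp: \<epsilon>_def)
  have He: "\<And>\<psi>. contraction \<psi> \<Longrightarrow> goodQ \<psi> \<Longrightarrow> \<exists>s\<in>{a..b}. \<epsilon> < \<bar>\<psi> s - \<phi> s\<bar>"
  proof -
    fix \<psi> :: "real \<Rightarrow> real" assume "contraction \<psi>" "goodQ \<psi>"
    then obtain s where "s \<in> {a..b}" "\<epsilon>0 < \<bar>\<psi> s - \<phi> s\<bar>" using He0 by blast
    then show "\<exists>s\<in>{a..b}. \<epsilon> < \<bar>\<psi> s - \<phi> s\<bar>" using \<epsilon>(3) by force
  qed
  obtain e0v :: 'a where e0v: "e0v \<noteq> 0" "orthogonal u e0v"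
    using orthogonal_to_vector_exists[OF assms(1)] by blast
  define e where "e = e0v /\<^sub>R norm e0v"
  have e: "norm e = 1" using e0v(1) by (simp add: e_def)
  have eu: "e \<bullet> u = 0" using e0v(2) by (simp add: e_def orthogonal_def inner_commute)
  define h where "h = \<epsilon> / 2"
  define \<rho> where "\<rho> = \<epsilon> / 10"
  define R where "R = \<bar>a\<bar> + \<bar>b\<bar> + 1"
  have h: "h > 0" and \<rho>: "\<rho> > 0" and R: "R > 0" using \<epsilon> by (auto simp: h_def \<rho>_def R_def)
  define A where "A = Sset u e R h id"
  have A: "A \<in> convex_bodies" unfolding A_def by (rule A_body[OF u e eu R h])
  from wa A obtain Dk :: "nat \<Rightarrow> 'a set \<Rightarrow> 'a set" where
    Dk: "\<And>k. Dk k \<in> polarization_compositions u"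
    and lim: "(\<lambda>k. \<integral>\<^sup>+ x. ennreal \<bar>indicator (Dk k A) x - indicator (D A) x\<bar> \<partial>lebesgue) \<longlonglongrightarrow> 0"
    unfolding weakly_approximable_def by blast
  define M where "M = emeasure lebesgue (cball (0::'a) \<rho>)"
  have Mc: "\<And>c. emeasure lebesgue (cball (c::'a) \<rho>) = M"
    unfolding M_def using \<rho> by (simp only: l1)
  have Mpos: "M > 0" unfolding M_def using \<rho> by (rule l2)
  have DA: "D A \<in> sets lebesgue" by (rule J_parts(1)[OF J A])
  have bound: "M \<le> (\<integral>\<^sup>+ x. ennreal \<bar>indicator (Dk k A) x - indicator (D A) x\<bar> \<partial>lebesgue)" for k
  proof -
    obtain ps where ps: "Dk k = foldr (\<circ>) ps id" "set ps \<subseteq> parallel_polarizations u"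
      using Dk[of k] unfolding polarization_compositions_def by blast
    obtain fs where fs: "set fs \<subseteq> {p. snd p = 1 \<or> snd p = -1}"
      "foldr (\<circ>) ps id (Sset u e R h id) \<subseteq> Sset u e R h (fcmp fs)"
      using comp_S[OF u eu ps(2)] by blast
    define \<psi> where "\<psi> = fcmp fs"
    have sub: "Dk k A \<subseteq> Sset u e R h \<psi>" using fs(2) ps(1) by (simp add: A_def \<psi>_def)
    obtain s0 where s0: "s0 \<in> {a..b}" "\<epsilon> < \<bar>\<psi> s0 - \<phi> s0\<bar>"
      using He[of \<psi>] contraction_fcmp[OF fs(1)] goodQ_fcmp[OF fs(1)] by (auto simp: \<psi>_def)
    define x where "x = s0 *\<^sub>R e"
    have ux: "u \<bullet> x = 0" using eu by (simp add: x_def inner_commute)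
    define B0 where "B0 = cball (x + s0 *\<^sub>R u) \<rho>"
    define B1 where "B1 = cball (x + \<phi> s0 *\<^sub>R u) \<rho>"
    have s0R: "\<bar>s0\<bar> + 2 * \<rho> \<le> R" using s0(1) \<epsilon> by (auto simp: R_def \<rho>_def)
    have B0A: "B0 \<subseteq> A" unfolding B0_def A_def x_def
      by (rule ball_in_A[OF u e eu s0R]) (use \<epsilon> in \<open>simp add: h_def \<rho>_def\<close>)
    have B0: "B0 \<in> convex_bodies" using \<rho> by (auto simp: B0_def convex_bodies_def)
    have gp: "2 * \<rho> + h < \<bar>\<psi> s0 - \<phi> s0\<bar>" using s0(2) \<epsilon>(1) unfolding h_def \<rho>_def by linarith
    have B1d: "B1 \<inter> Sset u e R h \<psi> = {}" unfolding B1_def x_def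
      by (rule ball_disj[OF u e eu contraction_fcmp[OF fs(1), folded \<psi>_def] gp])
    have e1: "ess_eq (D B0) B1" unfolding B0_def B1_def by (rule phiball[OF ux \<rho>])
    have e2: "ess_subset (D B0) (D A)" by (rule J_parts(2)[OF J B0 A B0A])
    have B1m: "B1 \<in> sets lebesgue" by (simp add: B1_def)
    have n1: "B1 - D B0 \<in> null_sets lebesgue" using e1 by (simp add: ess_eq_def ess_subset_def)
    have n2: "D B0 - D A \<in> null_sets lebesgue" using e2 by (simp add: ess_subset_def)
    have n3: "B1 - D A \<in> null_sets lebesgue"
      by (rule null_sets_subset[OF null_sets.Un[OF n1 n2]]) (use B1m DA in auto)
    have "M = emeasure lebesgue B1" using Mc by (simp add: B1_def)
    also have "\<dots> = emeasure lebesgue (B1 - (B1 - D A))" by (rule emeasure_Diff_null_set[OF n3 B1m, symmetric])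
    also have "B1 - (B1 - D A) = B1 \<inter> D A" by blast
    also have "emeasure lebesgue (B1 \<inter> D A) = (\<integral>\<^sup>+ x. indicator (B1 \<inter> D A) x \<partial>lebesgue)"
      using B1m DA by simp
    also have "\<dots> \<le> (\<integral>\<^sup>+ x. ennreal \<bar>indicator (Dk k A) x - indicator (D A) x\<bar> \<partial>lebesgue)"
    proof (rule nn_integral_mono)
      fix y
      show "indicator (B1 \<inter> D A) y \<le> ennreal \<bar>indicator (Dk k A) y - indicator (D A) y\<bar>"
      proof (cases "y \<in> B1 \<inter> D A")
        case True
        then have "y \<notin> Dk k A" using sub B1d by blast
        then show ?thesis using True by (simp add: indicator_def)
      next
        case False
        then show ?thesis by (simp add: indicator_def)
      qed
    qed
    finally show ?thesis .
  qed
  have "eventually (\<lambda>k. (\<integral>\<^sup>+ x. ennreal \<bar>indicator (Dk k A) x - indicator (D A) x\<bar> \<partial>lebesgue) < M) sequentially"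
    by (rule order_tendstoD(2)[OF lim Mpos])
  then obtain k where "(\<integral>\<^sup>+ x. ennreal \<bar>indicator (Dk k A) x - indicator (D A) x\<bar> \<partial>lebesgue) < M"
    by (auto simp: eventually_sequentially)
  with bound[of k] show False by simp
qed

end
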